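(* Let $n,m$ be positive integers with $m+2\le n$ and let $H$ be a graph. Then $$\gamma_{gr}(P_n^m\circ H)=\begin{cases}\left\lceil \frac{n}{m+1}\right\rceil (\gamma_{gr} (H)-(m+1))+n+m & \text{if } \gamma_{gr}(H)\geq m+1,\\ 2\gamma_{gr}(H)+n-m-2 & \text{if } \gamma_{gr}(H)\leq m.\end{cases}$$
   Context: $P_n^m$ has vertex set $[n]$, distinct $i,j$ adjacent iff $|i-j|\le m$. The lexicographic product $G\circ H$ has vertex set $V(G)\times V(H)$, with $(g_1,h_1)$ adjacent to $(g_2,h_2)$ iff $g_1g_2\in E(G)$, or $g_1=g_2$ and $h_1h_2\in E(H)$. $\gamma_{gr}$ is the Grundy domination number: the maximum length of a sequence $(v_1,\dots,v_k)$ of distinct vertices whose set is dominating and such that each $N[v_i]\setminus\bigcup_{j<i}N[v_j]$ is non-empty ($N[\cdot]$ the closed neighborhood). *)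

theory Defs
  imports Complex_Main
begin

definition graph :: "'a set \<Rightarrow> ('a \<Rightarrow> 'a \<Rightarrow> bool) \<Rightarrow> bool" where
  "graph V E \<longleftrightarrow> finite V \<and> V \<noteq> {} \<and>
     (\<forall>x y. E x y \<longrightarrow> x \<in> V \<and> y \<in> V \<and> x \<noteq> y \<and> E y x)"

definition cnbh :: "'a set \<Rightarrow> ('a \<Rightarrow> 'a \<Rightarrow> bool) \<Rightarrow> 'a \<Rightarrow> 'a set" where
  "cnbh V E v = {u \<in> V. u = v \<or> E v u}"

definition grundy_dom_seq :: "'a set \<Rightarrow> ('a \<Rightarrow> 'a \<Rightarrow> bool) \<Rightarrow> 'a list \<Rightarrow> bool" where
  "grundy_dom_seq V E xs \<longleftrightarrow> distinct xs \<and> set xs \<subseteq> V \<and>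
     (\<Union>v\<in>set xs. cnbh V E v) = V \<and>
     (\<forall>i<length xs. cnbh V E (xs ! i) - (\<Union>j<i. cnbh V E (xs ! j)) \<noteq> {})"

definition gamma_gr :: "'a set \<Rightarrow> ('a \<Rightarrow> 'a \<Rightarrow> bool) \<Rightarrow> nat" where
  "gamma_gr V E = Max {length xs | xs. grundy_dom_seq V E xs}"

definition path_pow_V :: "nat \<Rightarrow> nat set" where
  "path_pow_V n = {1..n}"

definition path_pow_E :: "nat \<Rightarrow> nat \<Rightarrow> nat \<Rightarrow> nat \<Rightarrow> bool" where
  "path_pow_E n m i j \<longleftrightarrow> i \<in> {1..n} \<and> j \<in> {1..n} \<and> i \<noteq> j \<and> i \<le> j + m \<and> j \<le> i + m"

definition lex_V :: "'a set \<Rightarrow> 'b set \<Rightarrow> ('a \<times> 'b) set" where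
  "lex_V VG VH = VG \<times> VH"

definition lex_E :: "'a set \<Rightarrow> ('a \<Rightarrow> 'a \<Rightarrow> bool) \<Rightarrow> 'b set \<Rightarrow> ('b \<Rightarrow> 'b \<Rightarrow> bool)
     \<Rightarrow> 'a \<times> 'b \<Rightarrow> 'a \<times> 'b \<Rightarrow> bool" where
  "lex_E VG EG VH EH p q \<longleftrightarrow> p \<in> VG \<times> VH \<and> q \<in> VG \<times> VH \<and>
     (EG (fst p) (fst q) \<or> (fst p = fst q \<and> EH (snd p) (snd q)))"

end

theory Submission
  imports Defs
begin

fun lseq :: "'a set \<Rightarrow> ('a \<Rightarrow> 'a \<Rightarrow> bool) \<Rightarrow> 'a set \<Rightarrow> 'a list \<Rightarrow> bool" where
  "lseq V E D [] = True"
| "lseq V E D (v # vs) = (v \<in> V \<and> \<not> cnbh V E v \<subseteq> D \<and> lseq V E (D \<union> cnbh V E v) vs)"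

lemma cnbh_sub: "cnbh V E v \<subseteq> V" by (auto simp: cnbh_def)
lemma cnbh_self: "v \<in> V \<Longrightarrow> v \<in> cnbh V E v" by (auto simp: cnbh_def)

lemma lseq_append:
  "lseq V E D (as @ bs) = (lseq V E D as \<and> lseq V E (D \<union> (\<Union>v\<in>set as. cnbh V E v)) bs)"
  by (induction as arbitrary: D) (auto simp: Un_assoc)

lemma UN_less_Suc_shift: "(\<Union>j<Suc i. f j) = f 0 \<union> (\<Union>j<i. f (Suc j))"
  by (auto simp: less_Suc_eq_0_disj)

lemma lseq_nth:
  "lseq V E D ys = (\<forall>i<length ys. ys!i \<in> V \<and> \<not> cnbh V E (ys!i) \<subseteq> D \<union> (\<Union>j<i. cnbh V E (ys!j)))"
proof (induction ys arbitrary: D)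
  case Nil then show ?case by simp
next
  case (Cons v vs)
  show ?case
    unfolding lseq.simps Cons.IH
    by (simp add: All_less_Suc2 UN_less_Suc_shift Un_assoc)
qed

lemma lseq_mem: "lseq V E D vs \<Longrightarrow> w \<in> set vs \<Longrightarrow> \<not> cnbh V E w \<subseteq> D"
  by (induction vs arbitrary: D) auto

lemma lseq_distinct: "lseq V E D vs \<Longrightarrow> distinct vs \<and> set vs \<subseteq> V"
proof (induction vs arbitrary: D)
  case Nil then show ?case by simp
next
  case (Cons v vs)
  then have "v \<notin> set vs" using lseq_mem[of V E "D \<union> cnbh V E v" vs v] by auto
  with Cons show ?case by auto
qed

lemma gds_iff:
  "grundy_dom_seq V E xs \<longleftrightarrow> lseq V E {} xs \<and> (\<Union>v\<in>set xs. cnbh V E v) = V"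
proof
  assume g: "grundy_dom_seq V E xs"
  note gg = g[unfolded grundy_dom_seq_def]
  have s: "set xs \<subseteq> V" using gg by (elim conjE)
  have u: "(\<Union>v\<in>set xs. cnbh V E v) = V" using gg by (elim conjE)
  have f: "\<forall>i<length xs. cnbh V E (xs ! i) - (\<Union>j<i. cnbh V E (xs ! j)) \<noteq> {}"
    using gg by (elim conjE)
  have "lseq V E {} xs" unfolding lseq_nth
  proof (intro allI impI)
    fix i assume i: "i < length xs"
    have "xs!i \<in> V" using s i nth_mem by blast
    moreover have "cnbh V E (xs ! i) - (\<Union>j<i. cnbh V E (xs ! j)) \<noteq> {}"
      using f i by simp
    ultimately show "xs ! i \<in> V \<and> \<not> cnbh V E (xs ! i) \<subseteq> {} \<union> (\<Union>j<i. cnbh V E (xs ! j))"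
      by simp
  qed
  with u show "lseq V E {} xs \<and> (\<Union>v\<in>set xs. cnbh V E v) = V" by simp
next
  assume a: "lseq V E {} xs \<and> (\<Union>v\<in>set xs. cnbh V E v) = V"
  from a have l: "lseq V E {} xs" by simp
  from lseq_distinct[OF l] have d: "distinct xs" "set xs \<subseteq> V" by simp_all
  have "\<forall>i<length xs. cnbh V E (xs ! i) - (\<Union>j<i. cnbh V E (xs ! j)) \<noteq> {}"
  proof (intro allI impI)
    fix i assume i: "i < length xs"
    then have "\<not> cnbh V E (xs ! i) \<subseteq> {} \<union> (\<Union>j<i. cnbh V E (xs ! j))"
      using a unfolding lseq_nth by simp
    then show "cnbh V E (xs ! i) - (\<Union>j<i. cnbh V E (xs ! j)) \<noteq> {}" by simp
  qed
  then show "grundy_dom_seq V E xs"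
    unfolding grundy_dom_seq_def using a d by simp
qed

lemma lseq_len: "finite V \<Longrightarrow> lseq V E D xs \<Longrightarrow> length xs \<le> card V"
proof -
  assume a: "finite V" "lseq V E D xs"
  from lseq_distinct[OF a(2)] have d: "distinct xs" "set xs \<subseteq> V" by simp_all
  have "length xs = card (set xs)" using distinct_card[OF d(1)] by simp
  also have "\<dots> \<le> card V" using card_mono[OF a(1) d(2)] .
  finally show ?thesis .
qed

lemma extension:
  assumes "finite V"
  shows "lseq V E {} xs \<Longrightarrow> \<exists>ys. grundy_dom_seq V E ys \<and> length xs \<le> length ys \<and>
     ((\<Union>v\<in>set xs. cnbh V E v) \<noteq> V \<longrightarrow> length xs < length ys)"
proof (induction "card V - length xs" arbitrary: xs rule: less_induct)
  case less
  show ?case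
  proof (cases "(\<Union>v\<in>set xs. cnbh V E v) = V")
    case True
    then have "grundy_dom_seq V E xs" using less.prems gds_iff[of V E xs] by simp
    then show ?thesis using True by (intro exI[of _ xs]) simp
  next
    case False
    define U where "U = (\<Union>v\<in>set xs. cnbh V E v)"
    have "U \<subseteq> V" unfolding U_def by (rule UN_least) (rule cnbh_sub)
    moreover have "U \<noteq> V" using False U_def by simp
    ultimately obtain u where u: "u \<in> V" "u \<notin> U" by blast
    have u2: "u \<notin> (\<Union>v\<in>set xs. cnbh V E v)" using u(2) U_def by simp
    have l2: "lseq V E {} (xs @ [u])"
      using less.prems u(1) u2 cnbh_self[OF u(1), of E] by (simp add: lseq_append; blast)
    have "length (xs @ [u]) \<le> card V" using lseq_len[OF assms l2] .
    then have "card V - length (xs @ [u]) < card V - length xs" by simp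
    from less.hyps[OF this l2] obtain ys where
      ys: "grundy_dom_seq V E ys" "length (xs @ [u]) \<le> length ys" by blast
    have "length xs < length ys" using ys(2) by simp
    then show ?thesis using ys(1) by (intro exI[of _ ys]) simp
  qed
qed

lemma gamma_finite:
  assumes "finite V"
  shows "finite {length xs | xs. grundy_dom_seq V E xs}"
proof -
  have "{length xs | xs. grundy_dom_seq V E xs} \<subseteq> {..card V}"
    using lseq_len[OF assms] gds_iff by fastforce
  then show ?thesis using finite_subset by blast
qed

lemma gamma_nonempty:
  assumes "finite V"
  shows "{length xs | xs. grundy_dom_seq V E xs} \<noteq> {}"
  using extension[OF assms, where xs="[]" and E=E] by auto

lemma gamma_ge:
  assumes "finite V" "lseq V E {} xs"
  shows "length xs \<le> gamma_gr V E"
proof -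
  obtain ys where "grundy_dom_seq V E ys" "length xs \<le> length ys"
    using extension[OF assms] by blast
  then show ?thesis unfolding gamma_gr_def
    using Max_ge[OF gamma_finite[OF assms(1)], of "length ys" E] by fastforce
qed

lemma gamma_dom:
  assumes "finite V" "lseq V E {} xs" "length xs = gamma_gr V E"
  shows "(\<Union>v\<in>set xs. cnbh V E v) = V"
proof (rule ccontr)
  assume "(\<Union>v\<in>set xs. cnbh V E v) \<noteq> V"
  then obtain ys where "grundy_dom_seq V E ys" "length xs < length ys"
    using extension[OF assms(1,2)] by blast
  then show False using assms(3) unfolding gamma_gr_def
    using Max_ge[OF gamma_finite[OF assms(1)], of "length ys" E] by fastforce
qed

lemma gamma_ex:
  assumes "finite V"
  shows "\<exists>xs. grundy_dom_seq V E xs \<and> length xs = gamma_gr V E"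
  using Max_in[OF gamma_finite[OF assms, of E] gamma_nonempty[OF assms, of E]]
  unfolding gamma_gr_def by auto

lemma gamma_pos:
  assumes "finite V" "V \<noteq> {}"
  shows "1 \<le> gamma_gr V E"
proof -
  obtain v where v: "v \<in> V" using assms by blast
  have "lseq V E {} [v]" using v cnbh_self[OF v] by auto
  from gamma_ge[OF assms(1) this] show ?thesis by simp
qed

lemma index_lseq:
  fixes J :: "nat set"
  assumes "finite J" "inj_on g J" "g ` J \<subseteq> V"
    and fp: "\<forall>j\<in>J. \<exists>y\<in>cnbh V E (g j). \<forall>j'\<in>J. j' < j \<longrightarrow> y \<notin> cnbh V E (g j')"
  shows "lseq V E {} (map g (sorted_list_of_set J))"
proof -
  define js where "js = sorted_list_of_set J"
  have sw: "sorted_wrt (<) js" unfolding js_def by simp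
  have sj: "set js = J" unfolding js_def using assms(1) by simp
  have "lseq V E {} (map g js)" unfolding lseq_nth
  proof (intro allI impI)
    fix i assume i: "i < length (map g js)"
    then have i': "i < length js" by simp
    have ji: "js ! i \<in> J" using nth_mem[OF i'] sj by simp
    then obtain y where y: "y \<in> cnbh V E (g (js!i))"
      "\<forall>j'\<in>J. j' < js!i \<longrightarrow> y \<notin> cnbh V E (g j')" using fp by blast
    have ny: "y \<notin> (\<Union>j<i. cnbh V E (map g js ! j))"
    proof
      assume "y \<in> (\<Union>j<i. cnbh V E (map g js ! j))"
      then obtain j where j: "j < i" "y \<in> cnbh V E (map g js ! j)" by blast
      have jl: "j < length js" using j(1) i' by simp
      have "js ! j < js ! i" using sorted_wrt_nth_less[OF sw j(1) i'] .
      moreover have "js ! j \<in> J" using nth_mem[OF jl] sj by simp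
      moreover have "y \<in> cnbh V E (g (js ! j))" using j(2) jl by simp
      ultimately show False using y(2) by blast
    qed
    have e: "map g js ! i = g (js ! i)" using i' by simp
    have "g (js!i) \<in> V" using ji assms(3) by blast
    moreover have "\<not> cnbh V E (g (js ! i)) \<subseteq> {} \<union> (\<Union>j<i. cnbh V E (map g js ! j))"
      using y(1) ny by blast
    ultimately show "map g js ! i \<in> V \<and> \<not> cnbh V E (map g js ! i) \<subseteq> {} \<union> (\<Union>j<i. cnbh V E (map g js ! j))"
      unfolding e by blast
  qed
  then show ?thesis unfolding js_def .
qed

lemma index_bound:
  fixes J :: "nat set"
  assumes "finite V" "finite J" "inj_on g J" "g ` J \<subseteq> V"
    and fp: "\<forall>j\<in>J. \<exists>y\<in>cnbh V E (g j). \<forall>j'\<in>J. j' < j \<longrightarrow> y \<notin> cnbh V E (g j')"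
  shows "card J \<le> gamma_gr V E"
    and "card J = gamma_gr V E \<Longrightarrow> (\<Union>j\<in>J. cnbh V E (g j)) = V"
proof -
  have l: "lseq V E {} (map g (sorted_list_of_set J))" using index_lseq[OF assms(2-5)] .
  have len: "length (map g (sorted_list_of_set J)) = card J" by simp
  show "card J \<le> gamma_gr V E" using gamma_ge[OF assms(1) l] len by simp
  assume "card J = gamma_gr V E"
  then have "(\<Union>v\<in>set (map g (sorted_list_of_set J)). cnbh V E v) = V"
    using gamma_dom[OF assms(1) l] len by simp
  then show "(\<Union>j\<in>J. cnbh V E (g j)) = V" using assms(2) by simp
qed

abbreviation PV :: "nat \<Rightarrow> 'a set \<Rightarrow> (nat \<times> 'a) set" where
  "PV n V \<equiv> lex_V (path_pow_V n) V"
abbreviation PE :: "nat \<Rightarrow> nat \<Rightarrow> 'a set \<Rightarrow> ('a \<Rightarrow> 'a \<Rightarrow> bool) \<Rightarrow> (nat \<times> 'a) \<Rightarrow> (nat \<times> 'a) \<Rightarrow> bool" where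
  "PE n m V E \<equiv> lex_E (path_pow_V n) (path_pow_E n m) V E"

lemma cnbhP:
  assumes "l \<in> {1..n}" "z \<in> V"
  shows "(l', y) \<in> cnbh (PV n V) (PE n m V E) (l, z) \<longleftrightarrow>
         y \<in> V \<and> (path_pow_E n m l l' \<or> (l' = l \<and> y \<in> cnbh V E z))"
  using assms unfolding cnbh_def lex_V_def lex_E_def path_pow_V_def path_pow_E_def
  by auto

lemma cnbhP_fst:
  assumes "u \<in> cnbh (PV n V) (PE n m V E) v"
  shows "fst u \<le> fst v + m \<and> fst u \<in> {1..n} \<and> snd u \<in> V"
  using assms unfolding cnbh_def lex_V_def lex_E_def path_pow_V_def path_pow_E_def
  by auto

lemma finite_PV: "finite V \<Longrightarrow> finite (PV n V)"
  unfolding lex_V_def path_pow_V_def by simp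

lemma lseq_antimono: "lseq V E D xs \<Longrightarrow> D' \<subseteq> D \<Longrightarrow> lseq V E D' xs"
proof (induction xs arbitrary: D D')
  case Nil then show ?case by simp
next
  case (Cons v vs)
  have "D' \<union> cnbh V E v \<subseteq> D \<union> cnbh V E v" using Cons.prems(2) by blast
  then show ?case using Cons by auto
qed

lemma layer_lseq:
  assumes "l \<in> {1..n}"
  shows "lseq V E {y. (l, y) \<in> D} zs \<Longrightarrow> lseq (PV n V) (PE n m V E) D (map (Pair l) zs)"
proof (induction zs arbitrary: D)
  case Nil then show ?case by simp
next
  case (Cons z zs)
  have zV: "z \<in> V" and nsub: "\<not> cnbh V E z \<subseteq> {y. (l, y) \<in> D}"
    and rest: "lseq V E ({y. (l, y) \<in> D} \<union> cnbh V E z) zs" using Cons.prems by auto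
  from nsub obtain y where y: "y \<in> cnbh V E z" "(l, y) \<notin> D" by blast
  have yV: "y \<in> V" using y(1) unfolding cnbh_def by blast
  have "(l, y) \<in> cnbh (PV n V) (PE n m V E) (l, z)"
    using cnbhP[OF assms zV, of l y m E] y(1) yV by simp
  then have n1: "\<not> cnbh (PV n V) (PE n m V E) (l, z) \<subseteq> D" using y(2) by blast
  have n2: "(l, z) \<in> PV n V" using assms zV unfolding lex_V_def path_pow_V_def by simp
  have sub: "{y. (l, y) \<in> D \<union> cnbh (PV n V) (PE n m V E) (l, z)} \<subseteq> {y. (l, y) \<in> D} \<union> cnbh V E z"
  proof
    fix w assume "w \<in> {y. (l, y) \<in> D \<union> cnbh (PV n V) (PE n m V E) (l, z)}"
    then have "(l, w) \<in> D \<or> (l, w) \<in> cnbh (PV n V) (PE n m V E) (l, z)" by simp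
    moreover have "(l, w) \<in> cnbh (PV n V) (PE n m V E) (l, z) \<Longrightarrow> w \<in> cnbh V E z"
      using cnbhP[OF assms zV, of l w m E] unfolding path_pow_E_def by simp
    ultimately show "w \<in> {y. (l, y) \<in> D} \<union> cnbh V E z" by blast
  qed
  have "lseq (PV n V) (PE n m V E) (D \<union> cnbh (PV n V) (PE n m V E) (l, z)) (map (Pair l) zs)"
    using Cons.IH lseq_antimono[OF rest sub] by blast
  then show ?case using n1 n2 by simp
qed

definition blk :: "'a list \<Rightarrow> 'a \<Rightarrow> nat \<times> nat \<Rightarrow> (nat \<times> 'a) list" where
  "blk zs z0 st = (if fst st = snd st then map (Pair (fst st)) zs else [(fst st, z0)])"

fun okT :: "nat \<Rightarrow> nat \<Rightarrow> nat \<Rightarrow> (nat \<times> nat) list \<Rightarrow> bool" where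
  "okT n m c [] = True"
| "okT n m c (st # sts) = (1 \<le> fst st \<and> fst st \<le> n \<and> c < snd st \<and>
      (snd st = fst st \<or> (snd st = fst st + m \<and> fst st + m \<le> n)) \<and> okT n m (max c (fst st + m)) sts)"

lemma okT_mono: "okT n m c sts \<Longrightarrow> c' \<le> c \<Longrightarrow> okT n m c' sts"
proof (induction sts arbitrary: c c')
  case Nil then show ?case by simp
next
  case (Cons st sts)
  have "max c' (fst st + m) \<le> max c (fst st + m)" using Cons.prems(2) by simp
  then show ?case using Cons by auto
qed

lemma construct_lseq:
  assumes "0 < m" "lseq V E {} zs" "z0 \<in> V"
  shows "okT n m c sts \<Longrightarrow> D \<subseteq> {u. fst u \<le> c} \<Longrightarrow>
    lseq (PV n V) (PE n m V E) D (concat (map (blk zs z0) sts))"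
proof (induction sts arbitrary: c D)
  case Nil then show ?case by simp
next
  case (Cons st sts)
  obtain l \<tau> where st: "st = (l, \<tau>)" by (cases st)
  have l: "l \<in> {1..n}" "c < \<tau>" and tt: "\<tau> = l \<or> (\<tau> = l + m \<and> l + m \<le> n)"
    and ok: "okT n m (max c (l + m)) sts" using Cons.prems(1) st by auto
  have b1: "lseq (PV n V) (PE n m V E) D (blk zs z0 st)"
  proof (cases "\<tau> = l")
    case True
    have "{y. (l, y) \<in> D} = {}" using Cons.prems(2) l(2) True by auto
    then have "lseq V E {y. (l, y) \<in> D} zs" using assms(2) by simp
    from layer_lseq[OF l(1) this] show ?thesis unfolding blk_def st using True by simp
  next
    case False
    then have t: "\<tau> = l + m" "l + m \<le> n" using tt by auto
    have "(\<tau>, z0) \<in> cnbh (PV n V) (PE n m V E) (l, z0)"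
      using cnbhP[OF l(1) assms(3), of \<tau> z0 m E] t assms(1,3) l(1)
      unfolding path_pow_E_def by simp
    moreover have "(\<tau>, z0) \<notin> D" using Cons.prems(2) l(2) by auto
    ultimately have "\<not> cnbh (PV n V) (PE n m V E) (l, z0) \<subseteq> D" by blast
    moreover have "(l, z0) \<in> PV n V" using l(1) assms(3) unfolding lex_V_def path_pow_V_def by simp
    ultimately show ?thesis unfolding blk_def st using False by simp
  qed
  have lay: "\<forall>v \<in> set (blk zs z0 st). fst v = l" unfolding blk_def st by auto
  have "D \<union> (\<Union>v\<in>set (blk zs z0 st). cnbh (PV n V) (PE n m V E) v) \<subseteq> {u. fst u \<le> max c (l + m)}"
  proof
    fix u assume "u \<in> D \<union> (\<Union>v\<in>set (blk zs z0 st). cnbh (PV n V) (PE n m V E) v)"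
    then show "u \<in> {u. fst u \<le> max c (l + m)}"
    proof
      assume "u \<in> D" then show ?thesis using Cons.prems(2) by auto
    next
      assume "u \<in> (\<Union>v\<in>set (blk zs z0 st). cnbh (PV n V) (PE n m V E) v)"
      then obtain v where v: "v \<in> set (blk zs z0 st)" "u \<in> cnbh (PV n V) (PE n m V E) v" by blast
      have "fst u \<le> fst v + m" using cnbhP_fst[OF v(2)] by simp
      then show ?thesis using lay v(1) by auto
    qed
  qed
  from Cons.IH[OF ok this] b1 show ?case by (simp add: lseq_append)
qed

lemma okT_P1:
  "r0 < s \<Longrightarrow> c < 1 + r0 * (m + 1) \<Longrightarrow> 1 + (s - 1) * (m + 1) \<le> n \<Longrightarrow>
   okT n m (1 + (s - 1) * (m + 1) + m) rest \<Longrightarrow>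
   okT n m c (map (\<lambda>r. (1 + r * (m + 1), 1 + r * (m + 1))) [r0..<s] @ rest)"
proof (induction "s - r0" arbitrary: r0 c)
  case 0 then show ?case by simp
next
  case (Suc d)
  have ups: "[r0..<s] = r0 # [Suc r0..<s]" using Suc.prems(1) by (simp add: upt_conv_Cons)
  have le: "1 + r0 * (m + 1) \<le> n"
  proof -
    have "r0 \<le> s - 1" using Suc.prems(1) by simp
    then have "r0 * (m + 1) \<le> (s - 1) * (m + 1)" by (rule mult_le_mono1)
    then show ?thesis using Suc.prems(3) by simp
  qed
  have mx: "max c (1 + r0 * (m + 1) + m) = 1 + r0 * (m + 1) + m" using Suc.prems(2) by simp
  show ?case
  proof (cases "Suc r0 < s")
    case True
    have "okT n m (1 + r0 * (m + 1) + m) (map (\<lambda>r. (1 + r * (m + 1), 1 + r * (m + 1))) [Suc r0..<s] @ rest)"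
      using Suc.hyps(1)[of "Suc r0" "1 + r0 * (m + 1) + m"] Suc.hyps(2) True Suc.prems(3,4) by simp
    then show ?thesis unfolding ups using Suc.prems(2) le mx by simp
  next
    case False
    then have "r0 = s - 1" using Suc.prems(1) by simp
    then have "[Suc r0..<s] = []" using False by simp
    then show ?thesis unfolding ups using Suc.prems(2,4) le mx \<open>r0 = s - 1\<close> by simp
  qed
qed

lemma okT_P2:
  "1 \<le> i0 \<Longrightarrow> c < i0 + m \<Longrightarrow> c \<le> n - 1 \<Longrightarrow> okT n m (n - 1) rest \<Longrightarrow>
   okT n m c (map (\<lambda>i. (i, i + m)) [i0..<n - m] @ rest)"
proof (induction "n - m - i0" arbitrary: i0 c)
  case 0
  then have e: "[i0..<n - m] = []" by simp
  show ?case unfolding e using okT_mono[OF 0(5) 0(4)] by simp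
next
  case (Suc d)
  have ups: "[i0..<n - m] = i0 # [Suc i0..<n - m]" using Suc.hyps(2) by (simp add: upt_conv_Cons)
  have "okT n m (max c (i0 + m)) (map (\<lambda>i. (i, i + m)) [Suc i0..<n - m] @ rest)"
    using Suc.hyps(1)[of "Suc i0" "max c (i0 + m)"] Suc.hyps(2) Suc.prems by simp
  moreover have "i0 + m < n" using Suc.hyps(2) by arith
  ultimately show ?case unfolding ups using Suc.prems by simp
qed

lemma len_concat_const: "(\<forall>x\<in>set xs. length (f x) = k) \<Longrightarrow> length (concat (map f xs)) = length xs * k"
  by (induction xs) auto

lemma lower_bound:
  assumes "graph V E" "0 < m" "1 \<le> s" "1 + (s - 1) * (m + 1) \<le> n - m - 1"
  shows "s * gamma_gr V E + (n - m - 1 - (1 + (s - 1) * (m + 1))) + gamma_gr V E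
           \<le> gamma_gr (PV n V) (PE n m V E)"
proof -
  have fin: "finite V" and ne: "V \<noteq> {}" using assms(1) unfolding graph_def by auto
  obtain zs where zs: "grundy_dom_seq V E zs" "length zs = gamma_gr V E" using gamma_ex[OF fin] by blast
  have lz: "lseq V E {} zs" using zs(1) gds_iff by blast
  obtain z0 where z0: "z0 \<in> V" using ne by blast
  define b where "b = 1 + (s - 1) * (m + 1)"
  define st where "st = map (\<lambda>r. (1 + r * (m + 1), 1 + r * (m + 1))) [0..<s] @
     (map (\<lambda>i. (i, i + m)) [b + 1..<n - m] @ [(n, n)])"
  have n1: "1 \<le> n" using assms(4) by simp
  have ok3: "okT n m (n - 1) [(n, n)]" using n1 by simp
  have ok2: "okT n m (b + m) (map (\<lambda>i. (i, i + m)) [b + 1..<n - m] @ [(n, n)])"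
    using okT_P2[OF _ _ _ ok3, of "b + 1" "b + m"] assms(4) unfolding b_def by simp
  have ok: "okT n m 0 st" unfolding st_def b_def
    using okT_P1[of 0 s 0 m n, OF _ _ _ ok2[unfolded b_def]] assms(3,4) by simp
  have l: "lseq (PV n V) (PE n m V E) {} (concat (map (blk zs z0) st))"
    using construct_lseq[OF assms(2) lz z0 ok] by simp
  have "length (concat (map (blk zs z0) st)) = s * gamma_gr V E + (n - m - 1 - b) + gamma_gr V E"
  proof -
    have a: "length (concat (map (blk zs z0) (map (\<lambda>r. (1 + r * (m + 1), 1 + r * (m + 1))) [0..<s])))
       = s * gamma_gr V E"
      using len_concat_const[of "map (\<lambda>r. (1 + r * (m + 1), 1 + r * (m + 1))) [0..<s]" "blk zs z0" "gamma_gr V E"]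
      zs(2) by (simp add: blk_def)
    have b: "length (concat (map (blk zs z0) (map (\<lambda>i. (i, i + m)) [b + 1..<n - m]))) = n - m - 1 - b"
      using len_concat_const[of "map (\<lambda>i. (i, i + m)) [b + 1..<n - m]" "blk zs z0" 1] assms(2)
      by (simp add: blk_def)
    have c: "length (blk zs z0 (n, n)) = gamma_gr V E" using zs(2) by (simp add: blk_def)
    show ?thesis unfolding st_def using a b c by simp
  qed
  then show ?thesis using gamma_ge[OF finite_PV[OF fin] l] unfolding b_def by simp
qed

lemma NG_sym: "path_pow_E n m a b = path_pow_E n m b a"
  unfolding path_pow_E_def by auto

lemma NG_irr: "\<not> path_pow_E n m a a"
  unfolding path_pow_E_def by auto

locale UB =
  fixes n m :: nat and V :: "'a set" and E :: "'a \<Rightarrow> 'a \<Rightarrow> bool" and xs :: "(nat \<times> 'a) list"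
  assumes gr: "graph V E" and m0: "0 < m" and nm: "m + 2 \<le> n"
    and gds: "grundy_dom_seq (PV n V) (PE n m V E) xs"
begin

definition L :: "nat \<Rightarrow> nat" where "L j = fst (xs ! j)"
definition Y :: "nat \<Rightarrow> 'a" where "Y j = snd (xs ! j)"
definition NG :: "nat \<Rightarrow> nat set" where "NG l = {l'. path_pow_E n m l l'}"
definition cN :: "nat \<times> 'a \<Rightarrow> (nat \<times> 'a) set" where "cN v = cnbh (PV n V) (PE n m V E) v"
definition Dm :: "nat \<Rightarrow> (nat \<times> 'a) set" where "Dm i = (\<Union>j<i. cN (xs ! j))"
definition isA :: "nat \<Rightarrow> bool" where
  "isA j \<longleftrightarrow> j < length xs \<and> (\<exists>y \<in> cnbh V E (Y j). (L j, y) \<notin> Dm j)"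
definition wit :: "nat \<Rightarrow> nat \<Rightarrow> bool" where
  "wit i l' \<longleftrightarrow> i < length xs \<and> l' \<in> NG (L i) \<and> (\<exists>y\<in>V. (l', y) \<notin> Dm i)"

lemma finV: "finite V" and neV: "V \<noteq> {}" using gr unfolding graph_def by auto

lemma NG_sym': "a \<in> NG b \<longleftrightarrow> b \<in> NG a" unfolding NG_def using NG_sym by blast

lemma NG_irr': "a \<notin> NG a" unfolding NG_def using NG_irr by blast

lemma NG_range: "a \<in> NG b \<Longrightarrow> a \<in> {1..n} \<and> b \<in> {1..n} \<and> a \<noteq> b \<and> a \<le> b + m \<and> b \<le> a + m"
  unfolding NG_def path_pow_E_def by auto

lemma NG_intro: "a \<in> {1..n} \<Longrightarrow> b \<in> {1..n} \<Longrightarrow> a \<noteq> b \<Longrightarrow> a \<le> b + m \<Longrightarrow> b \<le> a + m \<Longrightarrow> a \<in> NG b"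
  unfolding NG_def path_pow_E_def by auto

lemma gd: "distinct xs" "set xs \<subseteq> PV n V"
  "\<forall>i<length xs. cN (xs ! i) - Dm i \<noteq> {}"
  "(\<Union>v\<in>set xs. cN v) = PV n V"
  using gds unfolding grundy_dom_seq_def cN_def Dm_def by auto

lemma xs_in:
  assumes "j < length xs"
  shows "L j \<in> {1..n}" "Y j \<in> V" "xs ! j = (L j, Y j)"
proof -
  have "xs ! j \<in> PV n V" using gd(2) nth_mem[OF assms] by blast
  then show "L j \<in> {1..n}" "Y j \<in> V" "xs ! j = (L j, Y j)"
    unfolding L_def Y_def lex_V_def path_pow_V_def by auto
qed

lemma mem_cN:
  assumes "j < length xs"
  shows "(l', y) \<in> cN (xs ! j) \<longleftrightarrow> y \<in> V \<and> (l' \<in> NG (L j) \<or> (l' = L j \<and> y \<in> cnbh V E (Y j)))"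
  using cnbhP[OF xs_in(1,2)[OF assms], of l' y m E] xs_in(3)[OF assms]
  unfolding cN_def NG_def by simp

lemma notDm: "(l', y) \<notin> Dm i \<longleftrightarrow> (\<forall>j<i. (l', y) \<notin> cN (xs ! j))"
  unfolding Dm_def by blast

lemma A_or_wit:
  assumes "j < length xs"
  shows "isA j \<or> (\<exists>l'. wit j l')"
proof -
  obtain u where u: "u \<in> cN (xs ! j)" "u \<notin> Dm j" using gd(3) assms by blast
  obtain l' y where lu: "u = (l', y)" by (cases u)
  have "y \<in> V \<and> (l' \<in> NG (L j) \<or> (l' = L j \<and> y \<in> cnbh V E (Y j)))"
    using u(1) lu mem_cN[OF assms] by simp
  then show ?thesis using u(2) lu assms unfolding isA_def wit_def by blast
qed

lemma cnbhV: "y \<in> cnbh V E z \<Longrightarrow> y \<in> V" unfolding cnbh_def by blast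

lemma isA_noNG:
  assumes "isA j" "j' < j"
  shows "L j' \<notin> NG (L j)"
proof
  assume a: "L j' \<in> NG (L j)"
  obtain y where y: "y \<in> cnbh V E (Y j)" "(L j, y) \<notin> Dm j" using assms(1) unfolding isA_def by blast
  have jl: "j' < length xs" using assms unfolding isA_def by simp
  have "(L j, y) \<in> cN (xs ! j')" using mem_cN[OF jl] cnbhV[OF y(1)] a NG_sym' by simp
  then show False using y(2) assms(2) notDm by blast
qed

lemma wit_noNG:
  assumes "wit i l'" "j' < i"
  shows "L j' \<notin> NG l'"
proof
  assume a: "L j' \<in> NG l'"
  obtain y where y: "y \<in> V" "(l', y) \<notin> Dm i" using assms(1) unfolding wit_def by blast
  have jl: "j' < length xs" using assms unfolding wit_def by simp
  have "(l', y) \<in> cN (xs ! j')" using mem_cN[OF jl] y(1) a NG_sym' by simp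
  then show False using y(2) assms(2) notDm by blast
qed

lemma isA_intro:
  assumes "j < length xs" "\<forall>j'<j. L j' \<notin> NG (L j) \<and> L j' \<noteq> L j"
  shows "isA j"
proof -
  have yv: "Y j \<in> V" using xs_in[OF assms(1)] by simp
  have "Y j \<in> cnbh V E (Y j)" using cnbh_self[OF yv] .
  moreover have "(L j, Y j) \<notin> Dm j"
    unfolding notDm
  proof (intro allI impI)
    fix j' assume j': "j' < j"
    then have jl: "j' < length xs" using assms(1) by simp
    have "L j' \<notin> NG (L j)" "L j' \<noteq> L j" using assms(2) j' by auto
    then have "L j \<notin> NG (L j')" "L j \<noteq> L j'" using NG_sym' by auto
    then show "(L j, Y j) \<notin> cN (xs ! j')" using mem_cN[OF jl] by simp
  qed
  ultimately show ?thesis unfolding isA_def using assms(1) by blast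
qed

lemma len_pos: "0 < length xs"
proof -
  obtain v where v: "v \<in> V" using neV by blast
  have "(1, v) \<in> PV n V" using v nm unfolding lex_V_def path_pow_V_def by simp
  then have "set xs \<noteq> {}" using gd(4) by auto
  then show ?thesis by simp
qed

lemma isA0: "isA 0"
  using isA_intro[OF len_pos] by simp

end

context UB begin

definition Aset :: "nat set" where "Aset = {j. isA j}"
definition Bset :: "nat set" where "Bset = {j. j < length xs \<and> \<not> isA j}"
definition witf :: "nat \<Rightarrow> nat" where "witf j = (SOME l'. wit j l')"
definition W :: "nat set" where "W = witf ` Bset"
definition Pn :: "nat set" where "Pn = L ` Aset"
definition J :: "nat \<Rightarrow> nat set" where "J l = {j \<in> Aset. L j = l}"
definition X :: "nat set" where
  "X = {l' \<in> {1..n}. \<exists>j. isA j \<and> L j \<in> NG l' \<and> (\<forall>j'<j. L j' \<notin> NG l')}"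

lemma Aset_sub: "Aset \<subseteq> {..<length xs}" unfolding Aset_def isA_def by auto
lemma fin_A: "finite Aset" using Aset_sub finite_subset by blast
lemma fin_B: "finite Bset" unfolding Bset_def by simp

lemma len_AB: "length xs = card Aset + card Bset"
proof -
  have e: "Aset \<union> Bset = {..<length xs}" unfolding Aset_def Bset_def isA_def by auto
  have "Aset \<inter> Bset = {}" unfolding Aset_def Bset_def by auto
  then have "card (Aset \<union> Bset) = card Aset + card Bset" using card_Un_disjoint[OF fin_A fin_B] by simp
  moreover have "card (Aset \<union> Bset) = length xs" unfolding e by simp
  ultimately show ?thesis by simp
qed

lemma witf: "j \<in> Bset \<Longrightarrow> wit j (witf j)"
proof -
  assume j: "j \<in> Bset"
  then have "\<exists>l'. wit j l'" using A_or_wit unfolding Bset_def by blast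
  then show ?thesis unfolding witf_def by (rule someI_ex)
qed

lemma wit_unique: "wit i l' \<Longrightarrow> wit i' l' \<Longrightarrow> i = i'"
proof (rule ccontr)
  assume a: "wit i l'" "wit i' l'" "i \<noteq> i'"
  have "L i \<in> NG l'" "L i' \<in> NG l'" using a(1,2) NG_sym' unfolding wit_def by auto
  then show False using a wit_noNG[OF a(1), of i'] wit_noNG[OF a(2), of i]
    by (cases "i < i'") auto
qed

lemma card_W: "card W = card Bset"
proof -
  have "inj_on witf Bset"
    unfolding inj_on_def using witf wit_unique by metis
  then show ?thesis unfolding W_def by (rule card_image)
qed

lemma W_range: "W \<subseteq> {1..n}"
  unfolding W_def using witf NG_range unfolding wit_def by blast

lemma P_range: "Pn \<subseteq> {1..n}"
  unfolding Pn_def Aset_def isA_def using xs_in(1) by blast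

lemma fin_P: "finite Pn" unfolding Pn_def using fin_A by simp

lemma J_layer:
  assumes "l \<in> Pn"
  shows "card (J l) \<le> gamma_gr V E" and "l \<in> W \<Longrightarrow> card (J l) < gamma_gr V E"
proof -
  have finJ: "finite (J l)" unfolding J_def using fin_A by simp
  have inj: "inj_on Y (J l)"
  proof (rule inj_onI)
    fix a b assume ab: "a \<in> J l" "b \<in> J l" "Y a = Y b"
    have al: "a < length xs" "b < length xs" using ab(1,2) unfolding J_def Aset_def isA_def by auto
    have "xs ! a = xs ! b" using xs_in(3)[OF al(1)] xs_in(3)[OF al(2)] ab unfolding J_def by simp
    then show "a = b" using nth_eq_iff_index_eq[OF gd(1) al] by simp
  qed
  have img: "Y ` J l \<subseteq> V"
    using xs_in(2) unfolding J_def Aset_def isA_def by blast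
  have fp: "\<forall>j\<in>J l. \<exists>y\<in>cnbh V E (Y j). \<forall>j'\<in>J l. j' < j \<longrightarrow> y \<notin> cnbh V E (Y j')"
  proof
    fix j assume j: "j \<in> J l"
    then obtain y where y: "y \<in> cnbh V E (Y j)" "(L j, y) \<notin> Dm j"
      unfolding J_def Aset_def isA_def by blast
    have "\<forall>j'\<in>J l. j' < j \<longrightarrow> y \<notin> cnbh V E (Y j')"
    proof (intro ballI impI)
      fix j' assume j': "j' \<in> J l" "j' < j"
      have jl: "j' < length xs" using j' unfolding J_def Aset_def isA_def by auto
      have "(L j, y) \<notin> cN (xs ! j')" using y(2) j'(2) notDm by blast
      moreover have "L j' = L j" using j j' unfolding J_def by simp
      ultimately show "y \<notin> cnbh V E (Y j')" using mem_cN[OF jl] cnbhV[OF y(1)] by simp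
    qed
    then show "\<exists>y\<in>cnbh V E (Y j). \<forall>j'\<in>J l. j' < j \<longrightarrow> y \<notin> cnbh V E (Y j')" using y(1) by blast
  qed
  show le: "card (J l) \<le> gamma_gr V E" using index_bound(1)[OF finV finJ inj img fp] .
  assume lW: "l \<in> W"
  show "card (J l) < gamma_gr V E"
  proof (rule ccontr)
    assume "\<not> card (J l) < gamma_gr V E"
    then have eq: "card (J l) = gamma_gr V E" using le by simp
    have cov: "(\<Union>j\<in>J l. cnbh V E (Y j)) = V" using index_bound(2)[OF finV finJ inj img fp eq] .
    obtain i where i: "i \<in> Bset" "l = witf i" using lW unfolding W_def by blast
    have wi: "wit i l" using witf[OF i(1)] i(2) by simp
    obtain y where y: "y \<in> V" "(l, y) \<notin> Dm i" using wi unfolding wit_def by blast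
    obtain j where j: "j \<in> J l" "y \<in> cnbh V E (Y j)" using cov y(1) by blast
    have jA: "isA j" "L j = l" using j(1) unfolding J_def Aset_def by auto
    have iA: "\<not> isA i" using i(1) unfolding Bset_def by simp
    have Li: "L i \<in> NG l" using wi NG_sym' unfolding wit_def by simp
    have "\<not> i < j" using isA_noNG[OF jA(1)] Li jA(2) by blast
    moreover have "i \<noteq> j" using iA jA by blast
    ultimately have ji: "j < i" by simp
    have jl: "j < length xs" using jA unfolding isA_def by simp
    have "(l, y) \<in> cN (xs ! j)" using mem_cN[OF jl] y(1) j(2) jA(2) by simp
    then show False using y(2) ji notDm by blast
  qed
qed

lemma main_count: "length xs \<le> gamma_gr V E * card Pn + card (W - Pn)"
proof -
  let ?k = "gamma_gr V E"
  have AU: "Aset = (\<Union>l\<in>Pn. J l)" unfolding Pn_def J_def by auto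
  have "card Aset = (\<Sum>l\<in>Pn. card (J l))"
    unfolding AU
    by (rule card_UN_disjoint[OF fin_P]) (auto simp: J_def fin_A)
  also have "\<dots> = (\<Sum>l\<in>Pn \<inter> W. card (J l)) + (\<Sum>l\<in>Pn - W. card (J l))"
    using sum.Int_Diff[OF fin_P] by blast
  also have "\<dots> \<le> card (Pn \<inter> W) * (?k - 1) + card (Pn - W) * ?k"
  proof -
    have "(\<Sum>l\<in>Pn \<inter> W. card (J l)) \<le> of_nat (card (Pn \<inter> W)) * (?k - 1)"
      by (rule sum_bounded_above) (use J_layer(2) in fastforce)
    moreover have "(\<Sum>l\<in>Pn - W. card (J l)) \<le> of_nat (card (Pn - W)) * ?k"
      by (rule sum_bounded_above) (use J_layer(1) in blast)
    ultimately show ?thesis by simp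
  qed
  finally have cA: "card Aset \<le> card (Pn \<inter> W) * (?k - 1) + card (Pn - W) * ?k" .
  have fW: "finite W" unfolding W_def using fin_B by simp
  have cW: "card W = card (W \<inter> Pn) + card (W - Pn)" using card_Int_Diff[OF fW] .
  have cP: "card Pn = card (Pn \<inter> W) + card (Pn - W)" using card_Int_Diff[OF fin_P] .
  have "W \<inter> Pn = Pn \<inter> W" by blast
  then have "length xs \<le> card (Pn \<inter> W) * (?k - 1) + card (Pn - W) * ?k + card (Pn \<inter> W) + card (W - Pn)"
    using len_AB card_W cA cW by simp
  also have "\<dots> \<le> ?k * card Pn + card (W - Pn)"
  proof -
    have "card (Pn \<inter> W) * (?k - 1) + card (Pn \<inter> W) \<le> card (Pn \<inter> W) * ?k"
    proof -
      have "1 \<le> ?k" using gamma_pos[OF finV neV] .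
      then obtain k' where "?k = Suc k'" using not0_implies_Suc by fastforce
      then show ?thesis by (simp add: algebra_simps)
    qed
    then show ?thesis using cP by (simp add: algebra_simps)
  qed
  finally show ?thesis .
qed

end

context UB begin

lemma X_range: "X \<subseteq> {1..n}" unfolding X_def by blast
lemma fin_X: "finite X" using X_range finite_subset by blast

lemma X_W: "X \<inter> W = {}"
proof (rule ccontr)
  assume "X \<inter> W \<noteq> {}"
  then obtain l' where l': "l' \<in> X" "l' \<in> W" by blast
  obtain i where i: "i \<in> Bset" "l' = witf i" using l'(2) unfolding W_def by blast
  have wi: "wit i l'" using witf[OF i(1)] i(2) by simp
  obtain j where j: "isA j" "L j \<in> NG l'" "\<forall>j'<j. L j' \<notin> NG l'" using l'(1) unfolding X_def by blast
  have Li: "L i \<in> NG l'" using wi NG_sym' unfolding wit_def by simp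
  have "\<not> i < j" using j(3) Li by blast
  moreover have "\<not> j < i" using wit_noNG[OF wi] j(2) by blast
  moreover have "\<not> isA i" using i(1) unfolding Bset_def by simp
  ultimately show False using j(1) by (cases "i = j") auto
qed

lemma X_P: "X \<inter> Pn = {}"
proof (rule ccontr)
  assume "X \<inter> Pn \<noteq> {}"
  then obtain l' where l': "l' \<in> X" "l' \<in> Pn" by blast
  obtain j1 where j1: "isA j1" "L j1 = l'" using l'(2) unfolding Pn_def Aset_def by blast
  obtain j where j: "isA j" "L j \<in> NG l'" "\<forall>j'<j. L j' \<notin> NG l'" using l'(1) unfolding X_def by blast
  have "\<not> j < j1" using isA_noNG[OF j1(1), of j] j(2) j1(2) by blast
  moreover have "j \<noteq> j1" using j(2) j1(2) NG_irr' by blast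
  moreover have "\<not> j1 < j" using isA_noNG[OF j(1), of j1] j(2) j1(2) NG_sym' by blast
  ultimately show False by simp
qed

lemma card_three: "card (W - Pn) + card Pn + card X \<le> n"
proof -
  have fW: "finite (W - Pn)" unfolding W_def using fin_B by simp
  have d1: "(W - Pn) \<inter> Pn = {}" by blast
  have d2: "((W - Pn) \<union> Pn) \<inter> X = {}" using X_W X_P by blast
  have "card ((W - Pn) \<union> Pn \<union> X) = card (W - Pn) + card Pn + card X"
    using card_Un_disjoint[OF finite_UnI[OF fW fin_P] fin_X d2] card_Un_disjoint[OF fW fin_P d1] by simp
  moreover have "(W - Pn) \<union> Pn \<union> X \<subseteq> {1..n}" using W_range P_range X_range by blast
  then have "card ((W - Pn) \<union> Pn \<union> X) \<le> card {1..n}" by (rule card_mono[rotated]) simp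
  ultimately show ?thesis by simp
qed

lemma NG_card:
  assumes "l \<in> {1..n}"
  shows "m \<le> card (NG l)"
proof -
  define lo where "lo = (if l + m \<le> n then l else n - m)"
  have sub: "{lo..lo + m} - {l} \<subseteq> NG l"
  proof
    fix a assume a: "a \<in> {lo..lo + m} - {l}"
    show "a \<in> NG l"
      by (rule NG_intro) (use a assms nm in \<open>auto simp: lo_def split: if_splits\<close>)
  qed
  have lin: "l \<in> {lo..lo + m}" using assms nm unfolding lo_def by auto
  have "card ({lo..lo + m} - {l}) = m" using lin by simp
  moreover have fin: "finite (NG l)" unfolding NG_def path_pow_E_def by simp
  have "card ({lo..lo + m} - {l}) \<le> card (NG l)" by (rule card_mono[OF fin sub])
  ultimately show ?thesis by linarith
qed

lemma X_ge_m: "m \<le> card X"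
proof -
  have "NG (L 0) \<subseteq> X"
  proof
    fix l' assume l': "l' \<in> NG (L 0)"
    have "L 0 \<in> NG l'" using l' NG_sym' by simp
    moreover have "l' \<in> {1..n}" using NG_range[OF l'] by simp
    ultimately show "l' \<in> X" unfolding X_def using isA0 by blast
  qed
  moreover have "m \<le> card (NG (L 0))" using NG_card xs_in(1)[OF len_pos] by simp
  moreover have "card (NG (L 0)) \<le> card X" by (rule card_mono[OF fin_X \<open>NG (L 0) \<subseteq> X\<close>])
  ultimately show ?thesis by linarith
qed

definition fi :: "nat \<Rightarrow> nat" where "fi c = (LEAST j. j < length xs \<and> L j = c)"

lemma fi:
  assumes "c \<in> Pn"
  shows "fi c < length xs" "L (fi c) = c" "isA (fi c)" "\<forall>j'<fi c. L j' \<noteq> c \<and> L j' \<notin> NG c"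
proof -
  obtain j where j: "isA j" "L j = c" using assms unfolding Pn_def Aset_def by blast
  have jl: "j < length xs \<and> L j = c" using j unfolding isA_def by simp
  have f1: "fi c < length xs \<and> L (fi c) = c" unfolding fi_def by (rule LeastI[of _ j]) (rule jl)
  have f2: "fi c \<le> j" unfolding fi_def by (rule Least_le) (rule jl)
  have f3: "\<forall>j'<fi c. L j' \<noteq> c \<and> L j' \<notin> NG c"
  proof (intro allI impI)
    fix j' assume j': "j' < fi c"
    have "\<not> (j' < length xs \<and> L j' = c)" using not_less_Least[of j' "\<lambda>j. j < length xs \<and> L j = c"] j'
      unfolding fi_def by blast
    then have "L j' \<noteq> c" using j' f1 by simp
    moreover have "L j' \<notin> NG c" using isA_noNG[OF j(1), of j'] j' f2 j(2) by simp
    ultimately show "L j' \<noteq> c \<and> L j' \<notin> NG c" by blast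
  qed
  show "fi c < length xs" "L (fi c) = c" using f1 by auto
  show "\<forall>j'<fi c. L j' \<noteq> c \<and> L j' \<notin> NG c" using f3 .
  show "isA (fi c)" using isA_intro[of "fi c"] f1 f3 by simp
qed

lemma sep:
  assumes "c1 \<in> Pn" "c2 \<in> Pn" "c1 < c2"
  shows "c1 + m < c2"
proof -
  have ne: "fi c1 \<noteq> fi c2" using fi(2)[OF assms(1)] fi(2)[OF assms(2)] assms(3) by auto
  have "c1 \<notin> NG c2"
  proof (cases "fi c1 < fi c2")
    case True
    then have "L (fi c1) \<notin> NG c2" using fi(4)[OF assms(2)] by blast
    then show ?thesis using fi(2)[OF assms(1)] by simp
  next
    case False
    then have "fi c2 < fi c1" using ne by simp
    then have "L (fi c2) \<notin> NG c1" using fi(4)[OF assms(1)] by blast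
    then have "c2 \<notin> NG c1" using fi(2)[OF assms(2)] by simp
    then show ?thesis using NG_sym' by simp
  qed
  moreover have c12: "c1 \<in> {1..n}" "c2 \<in> {1..n}" using assms P_range by auto
  ultimately show ?thesis
  proof -
    assume nn: "c1 \<notin> NG c2"
    show ?thesis
    proof (rule ccontr)
      assume "\<not> c1 + m < c2"
      then have "c1 \<in> NG c2" using NG_intro[OF c12(1) c12(2)] assms(3) by simp
      then show False using nn by simp
    qed
  qed
qed

lemma gap:
  assumes b: "b \<in> Pn" and b': "b' \<in> Pn" and bb: "b < b'" and nob: "\<forall>c\<in>Pn. \<not> (b < c \<and> c < b')"
  shows "j < fi (if fi b < fi b' then b else b') \<Longrightarrow> b \<le> L j + m \<Longrightarrow> L j \<le> b' + m \<Longrightarrow> False"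
proof (induction j rule: less_induct)
  case (less j)
  have jb: "j < fi b" "j < fi b'" using less.prems(1) by (auto split: if_splits)
  have jl: "j < length xs" using jb(1) fi(1)[OF b] by simp
  have n1: "L j \<noteq> b" "L j \<notin> NG b" using fi(4)[OF b] jb(1) by auto
  have n2: "L j \<noteq> b'" "L j \<notin> NG b'" using fi(4)[OF b'] jb(2) by auto
  have Lr: "L j \<in> {1..n}" using xs_in(1)[OF jl] .
  have br: "b \<in> {1..n}" "b' \<in> {1..n}" using b b' P_range by auto
  have g1: "b + m < L j"
  proof (rule ccontr)
    assume "\<not> b + m < L j"
    then have "L j \<in> NG b" using NG_intro[OF Lr br(1) n1(1)] less.prems(2) by simp
    then show False using n1(2) by simp
  qed
  have g2: "L j + m < b'"
  proof (rule ccontr)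
    assume "\<not> L j + m < b'"
    then have "L j \<in> NG b'" using NG_intro[OF Lr br(2) n2(1)] less.prems(3) by simp
    then show False using n2(2) by simp
  qed
  have "isA j"
  proof (rule isA_intro[OF jl], intro allI impI)
    fix j' assume j': "j' < j"
    show "L j' \<notin> NG (L j) \<and> L j' \<noteq> L j"
    proof (rule ccontr)
      assume "\<not> (L j' \<notin> NG (L j) \<and> L j' \<noteq> L j)"
      then have "L j' \<le> L j + m \<and> L j \<le> L j' + m" using NG_range by auto
      then have "b \<le> L j' + m" "L j' \<le> b' + m" using g1 g2 by auto
      then show False using less.IH[OF j'] j' less.prems(1) by simp
    qed
  qed
  then have "L j \<in> Pn" unfolding Pn_def Aset_def by blast
  then show False using nob g1 g2 by auto
qed

definition nxt :: "nat \<Rightarrow> nat" where "nxt b = Min {c \<in> Pn. b < c}"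

lemma nxt:
  assumes "b \<in> Pn - {Max Pn}"
  shows "nxt b \<in> Pn" "b < nxt b" "\<forall>c\<in>Pn. \<not> (b < c \<and> c < nxt b)" "\<forall>c\<in>Pn. b < c \<longrightarrow> nxt b \<le> c"
proof -
  have "b \<le> Max Pn" using Max_ge[OF fin_P] assms by blast
  then have lt: "b < Max Pn" using assms by auto
  have ne: "Max Pn \<in> Pn" using Max_in[OF fin_P] assms by blast
  have fS: "finite {c \<in> Pn. b < c}" using fin_P by simp
  have nS: "{c \<in> Pn. b < c} \<noteq> {}" using lt ne by blast
  have m1: "nxt b \<in> {c \<in> Pn. b < c}" unfolding nxt_def using Min_in[OF fS nS] .
  show "nxt b \<in> Pn" "b < nxt b" using m1 by auto
  show m2: "\<forall>c\<in>Pn. b < c \<longrightarrow> nxt b \<le> c" unfolding nxt_def using Min_le[OF fS] by blast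
  show "\<forall>c\<in>Pn. \<not> (b < c \<and> c < nxt b)" using m2 by fastforce
qed

definition gmap :: "nat \<times> nat \<Rightarrow> nat" where
  "gmap bi = (if fi (fst bi) < fi (nxt (fst bi)) then fst bi + snd bi else nxt (fst bi) - snd bi)"

lemma gmap_X:
  assumes "b \<in> Pn - {Max Pn}" "i \<in> {1..m}"
  shows "gmap (b, i) \<in> X" "b < gmap (b, i)" "gmap (b, i) < nxt b"
proof -
  note nx = nxt[OF assms(1)]
  have bP: "b \<in> Pn" using assms(1) by simp
  have sp: "b + m < nxt b" using sep[OF bP nx(1) nx(2)] .
  have br: "b \<in> {1..n}" "nxt b \<in> {1..n}" using bP nx(1) P_range by auto
  note G = gap[OF bP nx(1) nx(2) nx(3)]
  define l' where "l' = gmap (b, i)"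
  show "b < gmap (b, i)" "gmap (b, i) < nxt b"
    using sp assms(2) unfolding gmap_def by auto
  then have l'r: "b < l'" "l' < nxt b" unfolding l'_def by auto
  have l'n: "l' \<in> {1..n}" using l'r br by auto
  show "gmap (b, i) \<in> X"
  proof (cases "fi b < fi (nxt b)")
    case True
    then have l'e: "l' = b + i" unfolding l'_def gmap_def by simp
    have "b \<in> NG l'" using NG_intro[OF br(1) l'n] l'e assms(2) by auto
    moreover have "\<forall>j'<fi b. L j' \<notin> NG l'"
    proof (intro allI impI)
      fix j' assume j': "j' < fi b"
      show "L j' \<notin> NG l'"
      proof
        assume "L j' \<in> NG l'"
        then have "L j' + m \<ge> l'" "L j' \<le> l' + m" using NG_range by auto
        then show False using G[of j'] j' True l'e l'r assms(2) by auto
      qed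
    qed
    ultimately have "isA (fi b) \<and> L (fi b) \<in> NG l' \<and> (\<forall>j'<fi b. L j' \<notin> NG l')"
      using fi(2,3)[OF bP] by simp
    then have "l' \<in> X" unfolding X_def using l'n by blast
    then show ?thesis unfolding l'_def .
  next
    case False
    then have l'e: "l' = nxt b - i" unfolding l'_def gmap_def by simp
    have "nxt b \<in> NG l'" using NG_intro[OF br(2) l'n] l'e assms(2) l'r by auto
    moreover have "\<forall>j'<fi (nxt b). L j' \<notin> NG l'"
    proof (intro allI impI)
      fix j' assume j': "j' < fi (nxt b)"
      show "L j' \<notin> NG l'"
      proof
        assume "L j' \<in> NG l'"
        then have h: "L j' + m \<ge> l'" "L j' \<le> l' + m" using NG_range by auto
        have "b \<le> L j' + m" using h(1) l'r(1) by linarith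
        moreover have "L j' \<le> nxt b + m" using h(2) l'e by arith
        ultimately show False using G[of j'] j' False by auto
      qed
    qed
    ultimately have "isA (fi (nxt b)) \<and> L (fi (nxt b)) \<in> NG l' \<and> (\<forall>j'<fi (nxt b). L j' \<notin> NG l')"
      using fi(2,3)[OF nx(1)] by simp
    then have "l' \<in> X" unfolding X_def using l'n by blast
    then show ?thesis unfolding l'_def .
  qed
qed

lemma X_ge: "(card Pn - 1) * m \<le> card X"
proof -
  let ?D = "(Pn - {Max Pn}) \<times> {1..m}"
  have inj: "inj_on gmap ?D"
  proof (rule inj_onI)
    fix u v assume u: "u \<in> ?D" and v: "v \<in> ?D" and e: "gmap u = gmap v"
    obtain b1 i1 where u1: "u = (b1, i1)" by (cases u)
    obtain b2 i2 where v1: "v = (b2, i2)" by (cases v)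
    have A1: "b1 \<in> Pn - {Max Pn}" "i1 \<in> {1..m}" using u u1 by auto
    have A2: "b2 \<in> Pn - {Max Pn}" "i2 \<in> {1..m}" using v v1 by auto
    note g1 = gmap_X[OF A1] and g2 = gmap_X[OF A2]
    have "\<not> b1 < b2"
    proof
      assume "b1 < b2"
      then have "nxt b1 \<le> b2" using nxt(4)[OF A1(1)] A2(1) by blast
      then show False using g1(3) g2(2) e u1 v1 by simp
    qed
    moreover have "\<not> b2 < b1"
    proof
      assume "b2 < b1"
      then have "nxt b2 \<le> b1" using nxt(4)[OF A2(1)] A1(1) by blast
      then show False using g1(2) g2(3) e u1 v1 by simp
    qed
    ultimately have bb: "b1 = b2" by simp
    have "nxt b1 > b1 + m" using sep[of b1 "nxt b1"] nxt(1,2)[OF A1(1)] A1(1) by simp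
    then have "i1 = i2" using e u1 v1 bb A1(2) A2(2) unfolding gmap_def by (auto split: if_splits)
    then show "u = v" using u1 v1 bb by simp
  qed
  have img: "gmap ` ?D \<subseteq> X"
  proof
    fix x assume "x \<in> gmap ` ?D"
    then obtain b i where bi: "b \<in> Pn - {Max Pn}" "i \<in> {1..m}" "x = gmap (b, i)" by blast
    show "x \<in> X" using gmap_X(1)[OF bi(1,2)] bi(3) by simp
  qed
  have "card ?D \<le> card X" using card_inj_on_le[OF inj img fin_X] .
  moreover have "card ?D = (card Pn - 1) * m"
  proof (cases "Pn = {}")
    case True then show ?thesis by simp
  next
    case False
    then have mx: "Max Pn \<in> Pn" using Max_in[OF fin_P] by blast
    show ?thesis unfolding card_cartesian_product card_Diff_singleton[OF mx] by simp
  qed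
  ultimately show ?thesis by simp
qed

end

lemma arith_final:
  fixes len k p w x n m t :: nat
  assumes a1: "len \<le> k * p + w" and a2: "w + p + x \<le> n" and a3: "m \<le> x"
    and a4: "(p - 1) * m \<le> x" and a5: "1 \<le> p" and a6: "1 \<le> k"
    and a7: "p * (m + 1) \<le> n + m \<Longrightarrow> p \<le> t" and a8: "1 \<le> t" and a9: "m + 2 \<le> n"
  shows "len \<le> (if m + 1 \<le> k then t * (k - m - 1) + n + m else 2 * k + n - m - 2)"
proof -
  have b1: "len + p + x \<le> k * p + n" using a1 a2 by linarith
  show ?thesis
  proof (cases "p = 1")
    case True
    then have c: "len + 1 + m \<le> k + n" using b1 a3 by simp
    show ?thesis
    proof (cases "m + 1 \<le> k")
      case True
      define d where "d = k - m - 1"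
      have kd: "k = d + m + 1" using True unfolding d_def by simp
      have "1 * d \<le> t * d" by (rule mult_le_mono1) (rule a8)
      then have "d \<le> t * d" by simp
      then have "len \<le> t * d + n + m" using c kd by linarith
      then show ?thesis using True unfolding d_def by simp
    next
      case False
      then show ?thesis using c a6 a9 by simp
    qed
  next
    case False
    then have p2: "2 \<le> p" using a5 by simp
    have pm: "(p - 1) * m + m = p * m" using a5 by (cases p) simp_all
    have b2: "len + p + (p - 1) * m \<le> k * p + n" using b1 a4 by linarith
    have b3: "p + (p - 1) * m \<le> n" using a2 a4 by linarith
    have pm1: "p * (m + 1) = p * m + p" by (simp add: algebra_simps)
    have b4: "p * (m + 1) \<le> n + m" using b3 pm pm1 by linarith
    have pt: "p \<le> t" using a7[OF b4] .
    have b5: "len + p * (m + 1) \<le> k * p + n + m" using b2 pm pm1 by linarith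
    show ?thesis
    proof (cases "m + 1 \<le> k")
      case True
      define d where "d = k - m - 1"
      have kd: "k = d + (m + 1)" using True unfolding d_def by simp
      have kp: "k * p = p * d + p * (m + 1)" unfolding kd by (simp add: algebra_simps)
      have "p * d \<le> t * d" by (rule mult_le_mono1) (rule pt)
      then have "len \<le> t * d + n + m" using b5 kp by linarith
      then show ?thesis using True unfolding d_def by simp
    next
      case False
      define e where "e = m + 1 - k"
      have ke: "k + e = m + 1" using False unfolding e_def by simp
      have kp: "k * p + e * p = p * (m + 1)" using ke by (metis add_mult_distrib mult.commute)
      have "2 * e \<le> p * e" by (rule mult_le_mono1) (rule p2)
      moreover have "p * e = e * p" by simp
      ultimately have "len + 2 * e \<le> n + m" using b5 kp by linarith
      then show ?thesis using False ke by simp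
    qed
  qed
qed

context UB begin

lemma P_pos: "1 \<le> card Pn"
proof -
  have "L 0 \<in> Pn" unfolding Pn_def Aset_def using isA0 by blast
  then have "Pn \<noteq> {}" by blast
  then show ?thesis using fin_P by (simp add: Suc_le_eq card_gt_0_iff)
qed

lemma upper:
  "length xs \<le> (if m + 1 \<le> gamma_gr V E
     then ((n + m) div (m + 1)) * (gamma_gr V E - m - 1) + n + m
     else 2 * gamma_gr V E + n - m - 2)"
proof (rule arith_final[OF main_count card_three X_ge_m X_ge P_pos])
  show "1 \<le> gamma_gr V E" using gamma_pos[OF finV neV] .
  show "card Pn * (m + 1) \<le> n + m \<Longrightarrow> card Pn \<le> (n + m) div (m + 1)"
    by (simp add: less_eq_div_iff_mult_less_eq)
  show "1 \<le> (n + m) div (m + 1)" using nm by (simp add: less_eq_div_iff_mult_less_eq)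
  show "m + 2 \<le> n" using nm .
qed

end

lemma ceil_t:
  fixes n m :: nat
  shows "\<lceil>real n / real (m + 1)\<rceil> = int ((n + m) div (m + 1))"
proof -
  define t where "t = (n + m) div (m + 1)"
  have t1: "t * (m + 1) \<le> n + m" unfolding t_def by (rule div_times_less_eq_dividend)
  have dm: "t * (m + 1) + (n + m) mod (m + 1) = n + m" unfolding t_def by (rule div_mult_mod_eq)
  have md: "(n + m) mod (m + 1) < m + 1" by simp
  have e: "(t + 1) * (m + 1) = t * (m + 1) + (m + 1)" by (simp add: algebra_simps)
  have t2: "n + m < (t + 1) * (m + 1)" using dm md e by linarith
  have r1: "real t * (real m + 1) \<le> real n + real m"
  proof -
    have "real (t * (m + 1)) \<le> real (n + m)" using t1 by (rule of_nat_mono)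
    then show ?thesis by (simp add: algebra_simps)
  qed
  have t3: "n \<le> t * (m + 1)" using t2 e by linarith
  have r2: "real n \<le> real t * (real m + 1)"
  proof -
    have "real n \<le> real (t * (m + 1))" using t3 by (rule of_nat_mono)
    then show ?thesis by (simp add: algebra_simps)
  qed
  have pos: "0 < real m + 1" by simp
  have "real t - 1 < real n / (real m + 1)"
    using r1 pos by (simp add: field_simps)
  moreover have "real n / (real m + 1) \<le> real t"
    using r2 pos by (simp add: field_simps)
  ultimately have "\<lceil>real n / (real m + 1)\<rceil> = int t"
    by (simp add: ceiling_eq_iff)
  moreover have "real (m + 1) = real m + 1" by simp
  ultimately show ?thesis unfolding t_def by metis
qed

theorem theorem6:
  fixes n m :: nat and V :: "'a set" and E :: "'a \<Rightarrow> 'a \<Rightarrow> bool"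
  assumes "0 < n" "0 < m" "m + 2 \<le> n" and "graph V E"
  shows "int (gamma_gr (lex_V (path_pow_V n) V)
                       (lex_E (path_pow_V n) (path_pow_E n m) V E)) =
    (if gamma_gr V E \<ge> m + 1
     then \<lceil>real n / real (m + 1)\<rceil> * (int (gamma_gr V E) - int (m + 1)) + int n + int m
     else 2 * int (gamma_gr V E) + int n - int m - 2)"
proof -
  have fin: "finite V" using assms(4) unfolding graph_def by blast
  define k where "k = gamma_gr V E"
  define t where "t = (n + m) div (m + 1)"
  define G where "G = gamma_gr (PV n V) (PE n m V E)"
  obtain xs where xs: "grundy_dom_seq (PV n V) (PE n m V E) xs" "length xs = G"
    using gamma_ex[OF finite_PV[OF fin]] unfolding G_def by blast
  interpret UB n m V E xs
    by unfold_locales (use assms xs in auto)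
  have up: "G \<le> (if m + 1 \<le> k then t * (k - m - 1) + n + m else 2 * k + n - m - 2)"
    using upper xs(2) unfolding k_def t_def by simp
  have t1: "t * (m + 1) \<le> n + m" unfolding t_def by (rule div_times_less_eq_dividend)
  have t2: "2 \<le> t" unfolding t_def using assms(3) by (simp add: less_eq_div_iff_mult_less_eq)
  have lo: "(if m + 1 \<le> k then t * (k - m - 1) + n + m else 2 * k + n - m - 2) \<le> G"
  proof (cases "m + 1 \<le> k")
    case True
    define u where "u = t - 2"
    have u: "t = u + 2" using t2 unfolding u_def by simp
    define d where "d = k - m - 1"
    have d: "k = d + m + 1" using True unfolding d_def by simp
    define q where "q = u * (m + 1)"
    have "q + 2 * (m + 1) \<le> n + m" using t1 unfolding u q_def by (simp add: algebra_simps)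
    then have "q + m + 2 \<le> n" by (simp add: algebra_simps)
    define r where "r = n - (q + m + 2)"
    have r: "n = r + q + m + 2" using \<open>q + m + 2 \<le> n\<close> unfolding r_def by simp
    have lb: "(t - 1) * k + (n - m - 1 - (1 + (t - 1 - 1) * (m + 1))) + k \<le> G"
      unfolding G_def k_def
    proof (rule lower_bound[OF assms(4) assms(2)])
      show "1 \<le> t - 1" using t2 by simp
      show "1 + (t - 1 - 1) * (m + 1) \<le> n - m - 1" using r unfolding u q_def by simp
    qed
    have "(t - 1) * k + (n - m - 1 - (1 + (t - 1 - 1) * (m + 1))) + k = t * (k - m - 1) + n + m"
      unfolding u d r q_def by (simp add: algebra_simps)
    then show ?thesis using True lb by simp
  next
    case False
    have lb: "1 * k + (n - m - 1 - (1 + (1 - 1) * (m + 1))) + k \<le> G"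
      unfolding G_def k_def
      by (rule lower_bound[OF assms(4) assms(2)]) (use assms(3) in simp_all)
    then show ?thesis using False assms(3) by simp
  qed
  have eq: "G = (if m + 1 \<le> k then t * (k - m - 1) + n + m else 2 * k + n - m - 2)"
    using up lo by simp
  have ct: "\<lceil>real n / real (m + 1)\<rceil> = int t" unfolding t_def by (rule ceil_t)
  show ?thesis
  proof (cases "m + 1 \<le> k")
    case True
    define d where "d = k - m - 1"
    have d: "k = d + m + 1" using True unfolding d_def by simp
    have "G = t * d + n + m" using eq True unfolding d_def by simp
    then have "int G = int t * (int k - int (m + 1)) + int n + int m"
      unfolding d by (simp add: algebra_simps)
    then show ?thesis using True ct unfolding G_def k_def by simp
  next
    case False
    then have "int G = 2 * int k + int n - int m - 2" using eq assms(3) by simp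
    then show ?thesis using False unfolding G_def k_def by simp
  qed
qed

end
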